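(* For every metric compactum $X$ and every field $G$ we have $d_GX\leq\dim_GX$.
   Context: All spaces are metric compacta. $H_k(\cdot;G)$ denotes reduced Čech homology with coefficients in $G$ and $H^k(\cdot;G)$ reduced Čech cohomology. For closed sets $A\subset K$, $i^k_{A,K}:H_k(A;G)\to H_k(K;G)$ is the homomorphism induced by inclusion. $\mathcal H_{X,G}$ is the set of all integers $k\ge 1$ such that there exist a closed set $F\subset X$ and a nontrivial element $\gamma\in H_{k-1}(F;G)$ with $i^{k-1}_{F,X}(\gamma)=0$; the homological dimension is $d_GX=\max\mathcal H_{X,G}$ (Alexandroff). The cohomological dimension $\dim_GX$ is the largest integer $n$ such that $H^n(X,A;G)\neq 0$ for some closed $A\subset X$. *)

theory Defs
  imports "HOL-Analysis.Analysis"
begin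

definition open_cover :: "'a::topological_space set \<Rightarrow> 'a set set \<Rightarrow> bool" where
  "open_cover S \<U> \<longleftrightarrow> finite \<U> \<and> (\<forall>U\<in>\<U>. openin (top_of_set S) U) \<and> \<Union>\<U> = S"

definition nerve_simp :: "'a set set \<Rightarrow> nat \<Rightarrow> 'a set list set" where
  "nerve_simp \<U> k = {\<sigma>. length \<sigma> = Suc k \<and> set \<sigma> \<subseteq> \<U> \<and> \<Inter>(set \<sigma>) \<noteq> {}}"

definition del_nth :: "nat \<Rightarrow> 'b list \<Rightarrow> 'b list" where
  "del_nth i xs = take i xs @ drop (Suc i) xs"

definition chains :: "'a set set \<Rightarrow> nat \<Rightarrow> ('a set list \<Rightarrow> 'g::field) set" where
  "chains \<U> k = {c. finite {\<sigma>. c \<sigma> \<noteq> 0} \<and> (\<forall>\<sigma>. c \<sigma> \<noteq> 0 \<longrightarrow> \<sigma> \<in> nerve_simp \<U> k)}"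

definition bd :: "('a set list \<Rightarrow> 'g::field) \<Rightarrow> 'a set list \<Rightarrow> 'g" where
  "bd c \<tau> = (\<Sum>\<sigma>\<in>{\<sigma>. c \<sigma> \<noteq> 0}. \<Sum>i<length \<sigma>.
              if del_nth i \<sigma> = \<tau> then (-1) ^ i * c \<sigma> else 0)"

definition aug :: "('a set list \<Rightarrow> 'g::field) \<Rightarrow> 'g" where
  "aug c = (\<Sum>\<sigma>\<in>{\<sigma>. c \<sigma> \<noteq> 0}. c \<sigma>)"

text \<open>Reduced cycles (augmented complex in degree 0) and boundaries.\<close>
definition cycles :: "'a set set \<Rightarrow> nat \<Rightarrow> ('a set list \<Rightarrow> 'g::field) set" where
  "cycles \<U> k = {c \<in> chains \<U> k. if k = 0 then aug c = 0 else bd c = (\<lambda>_. 0)}"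

definition boundaries :: "'a set set \<Rightarrow> nat \<Rightarrow> ('a set list \<Rightarrow> 'g::field) set" where
  "boundaries \<U> k = bd ` chains \<U> (Suc k)"

definition hclass :: "'a set set \<Rightarrow> nat \<Rightarrow> ('a set list \<Rightarrow> 'g::field) \<Rightarrow> ('a set list \<Rightarrow> 'g) set" where
  "hclass \<U> k c = {(\<lambda>\<sigma>. c \<sigma> + b \<sigma>) | b. b \<in> boundaries \<U> k}"

definition nerve_homology :: "'a set set \<Rightarrow> nat \<Rightarrow> ('a set list \<Rightarrow> 'g::field) set set" where
  "nerve_homology \<U> k = hclass \<U> k ` cycles \<U> k"

definition is_proj :: "'a set set \<Rightarrow> 'a set set \<Rightarrow> ('a set \<Rightarrow> 'a set) \<Rightarrow> bool" where
  "is_proj \<V> \<U> p \<longleftrightarrow> (\<forall>V\<in>\<V>. p V \<in> \<U> \<and> V \<subseteq> p V)"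

definition push :: "('a set \<Rightarrow> 'a set) \<Rightarrow> ('a set list \<Rightarrow> 'g::field) \<Rightarrow> 'a set list \<Rightarrow> 'g" where
  "push p c \<tau> = (\<Sum>\<sigma>\<in>{\<sigma>. c \<sigma> \<noteq> 0}. if map p \<sigma> = \<tau> then c \<sigma> else 0)"

text \<open>Reduced Cech homology H_k(S;G): the inverse limit over finite open covers,
  represented as compatible families of homology classes.\<close>
definition cech_homology :: "'g::field itself \<Rightarrow> 'a::topological_space set \<Rightarrow> nat
    \<Rightarrow> ('a set set \<Rightarrow> ('a set list \<Rightarrow> 'g) set) set" where
  "cech_homology G S k = {\<gamma>.
     (\<forall>\<U>. open_cover S \<U> \<longrightarrow> \<gamma> \<U> \<in> nerve_homology \<U> k) \<and>
     (\<forall>\<U> \<V> p. open_cover S \<U> \<and> open_cover S \<V> \<and> is_proj \<V> \<U> p \<longrightarrow>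
                 (\<forall>c\<in>\<gamma> \<V>. push p c \<in> \<gamma> \<U>)) \<and>
     (\<forall>\<U>. \<not> open_cover S \<U> \<longrightarrow> \<gamma> \<U> = {})}"

definition cech_zero :: "'a::topological_space set \<Rightarrow> nat \<Rightarrow> ('a set set \<Rightarrow> ('a set list \<Rightarrow> 'g::field) set) \<Rightarrow> bool" where
  "cech_zero S k \<gamma> \<longleftrightarrow> (\<forall>\<U>. open_cover S \<U> \<longrightarrow> \<gamma> \<U> = boundaries \<U> k)"

text \<open>i_{F,X}(gamma) = 0, for F subset of X: at each cover U of X the class of gamma at
  the trace cover U|F is mapped into N(U) to the zero class.\<close>
definition incl_image_zero :: "'a::topological_space set \<Rightarrow> 'a set \<Rightarrow> nat
    \<Rightarrow> ('a set set \<Rightarrow> ('a set list \<Rightarrow> 'g::field) set) \<Rightarrow> bool" where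
  "incl_image_zero F X k \<gamma> \<longleftrightarrow>
     (\<forall>\<U> p. open_cover X \<U> \<and> is_proj ((\<lambda>U. U \<inter> F) ` \<U>) \<U> p \<longrightarrow>
        (\<forall>c \<in> \<gamma> ((\<lambda>U. U \<inter> F) ` \<U>). push p c \<in> boundaries \<U> k))"

definition hom_dim_set :: "'g::field itself \<Rightarrow> 'a::topological_space set \<Rightarrow> nat set" where
  "hom_dim_set G X = {k. k \<ge> 1 \<and> (\<exists>F \<gamma>. closed F \<and> F \<subseteq> X \<and> \<gamma> \<in> cech_homology G F (k - 1)
        \<and> \<not> cech_zero F (k - 1) \<gamma> \<and> incl_image_zero F X (k - 1) \<gamma>)}"

text \<open>Relative simplices: those of N(U) not in the subcomplex N_A(U).\<close>
definition rel_simp :: "'a set set \<Rightarrow> 'a set \<Rightarrow> nat \<Rightarrow> 'a set list set" where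
  "rel_simp \<U> A k = {\<sigma> \<in> nerve_simp \<U> k. \<Inter>(set \<sigma>) \<inter> A = {}}"

definition cochains :: "'a set set \<Rightarrow> 'a set \<Rightarrow> nat \<Rightarrow> ('a set list \<Rightarrow> 'g::field) set" where
  "cochains \<U> A k = {f. \<forall>\<sigma>. f \<sigma> \<noteq> 0 \<longrightarrow> \<sigma> \<in> rel_simp \<U> A k}"

definition cobd :: "'a set set \<Rightarrow> nat \<Rightarrow> ('a set list \<Rightarrow> 'g::field) \<Rightarrow> 'a set list \<Rightarrow> 'g" where
  "cobd \<U> k f \<sigma> = (if \<sigma> \<in> nerve_simp \<U> (Suc k)
      then (\<Sum>i<Suc (Suc k). (-1) ^ i * f (del_nth i \<sigma>)) else 0)"

definition cocycles :: "'a set set \<Rightarrow> 'a set \<Rightarrow> nat \<Rightarrow> ('a set list \<Rightarrow> 'g::field) set" where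
  "cocycles \<U> A k = {f \<in> cochains \<U> A k. cobd \<U> k f = (\<lambda>_. 0)}"

text \<open>Coboundaries of the (reduced, when A is empty) relative cochain complex.\<close>
definition is_cobd :: "'a set set \<Rightarrow> 'a set \<Rightarrow> nat \<Rightarrow> ('a set list \<Rightarrow> 'g::field) \<Rightarrow> bool" where
  "is_cobd \<U> A k f = (case k of
      0 \<Rightarrow> A = {} \<and> (\<exists>c. \<forall>\<sigma>\<in>nerve_simp \<U> 0. f \<sigma> = c)
    | Suc j \<Rightarrow> (\<exists>g \<in> cochains \<U> A j. f = cobd \<U> j g))"

definition pull :: "'a set set \<Rightarrow> nat \<Rightarrow> ('a set \<Rightarrow> 'a set) \<Rightarrow> ('a set list \<Rightarrow> 'g::field) \<Rightarrow> 'a set list \<Rightarrow> 'g" where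
  "pull \<V> k p f \<sigma> = (if \<sigma> \<in> nerve_simp \<V> k then f (map p \<sigma>) else 0)"

text \<open>H^n(X,A;G) \<noteq> 0 for the direct limit over finite open covers: some cocycle on some
  cover stays non-cohomologous to zero on every refinement.\<close>
definition cech_cohom_nonzero :: "'g::field itself \<Rightarrow> 'a::topological_space set \<Rightarrow> 'a set \<Rightarrow> nat \<Rightarrow> bool" where
  "cech_cohom_nonzero G X A n \<longleftrightarrow>
     (\<exists>\<U> (f :: 'a set list \<Rightarrow> 'g). open_cover X \<U> \<and> f \<in> cocycles \<U> A n \<and>
        (\<forall>\<V> p. open_cover X \<V> \<and> is_proj \<V> \<U> p \<longrightarrow> \<not> is_cobd \<V> A n (pull \<V> n p f)))"

end

theory Submission imports Defs "HOL-Library.Function_Algebras" begin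

definition pair :: "('b \<Rightarrow> 'g::field) \<Rightarrow> ('b \<Rightarrow> 'g) \<Rightarrow> 'g" where
  "pair h c = (\<Sum>\<sigma>\<in>{\<sigma>. c \<sigma> \<noteq> 0}. c \<sigma> * h \<sigma>)"

lemma pair_sup:
  assumes "finite S" "{\<sigma>. c \<sigma> \<noteq> 0} \<subseteq> S"
  shows "pair h c = (\<Sum>\<sigma>\<in>S. c \<sigma> * h \<sigma>)"
  unfolding pair_def by (rule sum.mono_neutral_left) (use assms in auto)

lemma push_sup:
  assumes "finite S" "{\<sigma>. c \<sigma> \<noteq> 0} \<subseteq> S"
  shows "push p c \<tau> = (\<Sum>\<sigma>\<in>S. if map p \<sigma> = \<tau> then c \<sigma> else 0)"
  unfolding push_def by (rule sum.mono_neutral_left) (use assms in auto)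

lemma bd_sup:
  assumes "finite S" "{\<sigma>. c \<sigma> \<noteq> 0} \<subseteq> S"
  shows "bd c \<tau> = (\<Sum>\<sigma>\<in>S. \<Sum>i<length \<sigma>. if del_nth i \<sigma> = \<tau> then (-1) ^ i * c \<sigma> else 0)"
  unfolding bd_def
proof (rule sum.mono_neutral_left)
  show "\<forall>i\<in>S - {\<sigma>. c \<sigma> \<noteq> 0}. (\<Sum>ia<length i. if del_nth ia i = \<tau> then (- 1) ^ ia * c i else 0) = 0"
  proof
    fix i assume "i \<in> S - {\<sigma>. c \<sigma> \<noteq> 0}"
    then have "c i = 0" by simp
    then show "(\<Sum>ia<length i. if del_nth ia i = \<tau> then (- 1) ^ ia * c i else 0) = 0" by (intro sum.neutral) simp
  qed
qed (use assms in auto)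

lemma supp_push: "{\<tau>. push p c \<tau> \<noteq> 0} \<subseteq> map p ` {\<sigma>. c \<sigma> \<noteq> 0}"
proof
  fix \<tau> assume "\<tau> \<in> {\<tau>. push p c \<tau> \<noteq> 0}"
  then have "push p c \<tau> \<noteq> 0" by simp
  have "\<exists>\<sigma>. c \<sigma> \<noteq> 0 \<and> map p \<sigma> = \<tau>"
  proof (rule ccontr)
    assume "\<not> (\<exists>\<sigma>. c \<sigma> \<noteq> 0 \<and> map p \<sigma> = \<tau>)"
    then have "push p c \<tau> = 0" unfolding push_def by (intro sum.neutral) auto
    with \<open>push p c \<tau> \<noteq> 0\<close> show False by simp
  qed
  then show "\<tau> \<in> map p ` {\<sigma>. c \<sigma> \<noteq> 0}" by auto
qed

lemma supp_bd: "{\<tau>. bd c \<tau> \<noteq> 0} \<subseteq> (\<Union>\<sigma>\<in>{\<sigma>. c \<sigma> \<noteq> 0}. (\<lambda>i. del_nth i \<sigma>) ` {..<length \<sigma>})"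
proof
  fix \<tau> assume "\<tau> \<in> {\<tau>. bd c \<tau> \<noteq> 0}"
  then have "bd c \<tau> \<noteq> 0" by simp
  have "\<exists>\<sigma> i. c \<sigma> \<noteq> 0 \<and> i < length \<sigma> \<and> del_nth i \<sigma> = \<tau>"
  proof (rule ccontr)
    assume "\<not> (\<exists>\<sigma> i. c \<sigma> \<noteq> 0 \<and> i < length \<sigma> \<and> del_nth i \<sigma> = \<tau>)"
    then have "bd c \<tau> = 0" unfolding bd_def by (intro sum.neutral ballI) auto
    with \<open>bd c \<tau> \<noteq> 0\<close> show False by simp
  qed
  then show "\<tau> \<in> (\<Union>\<sigma>\<in>{\<sigma>. c \<sigma> \<noteq> 0}. (\<lambda>i. del_nth i \<sigma>) ` {..<length \<sigma>})" by auto
qed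

lemma fin_push: "finite {\<sigma>. c \<sigma> \<noteq> 0} \<Longrightarrow> finite {\<tau>. push p c \<tau> \<noteq> 0}"
  by (rule finite_subset[OF supp_push]) auto

lemma fin_bd: "finite {\<sigma>. c \<sigma> \<noteq> 0} \<Longrightarrow> finite {\<tau>. bd c \<tau> \<noteq> 0}"
  by (rule finite_subset[OF supp_bd]) auto

lemma pair_push:
  assumes fin: "finite {\<sigma>. c \<sigma> \<noteq> 0}"
  shows "pair h (push p c) = pair (\<lambda>\<sigma>. h (map p \<sigma>)) c"
proof -
  let ?C = "{\<sigma>. c \<sigma> \<noteq> 0}"
  let ?S = "map p ` ?C"
  have "pair h (push p c) = (\<Sum>\<tau>\<in>?S. push p c \<tau> * h \<tau>)"
    by (rule pair_sup) (use fin supp_push in auto)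
  also have "\<dots> = (\<Sum>\<tau>\<in>?S. \<Sum>\<sigma>\<in>?C. if map p \<sigma> = \<tau> then c \<sigma> * h \<tau> else 0)"
    unfolding push_def by (auto simp: sum_distrib_right intro!: sum.cong)
  also have "\<dots> = (\<Sum>\<sigma>\<in>?C. \<Sum>\<tau>\<in>?S. if map p \<sigma> = \<tau> then c \<sigma> * h \<tau> else 0)"
    by (rule sum.swap)
  also have "\<dots> = (\<Sum>\<sigma>\<in>?C. c \<sigma> * h (map p \<sigma>))"
    using fin by (auto intro!: sum.cong simp: sum.delta)
  also have "\<dots> = pair (\<lambda>\<sigma>. h (map p \<sigma>)) c" unfolding pair_def ..
  finally show ?thesis .
qed

lemma pair_bd:
  assumes fin: "finite {\<sigma>. c \<sigma> \<noteq> 0}"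
  shows "pair h (bd c) = (\<Sum>\<sigma>\<in>{\<sigma>. c \<sigma> \<noteq> 0}. c \<sigma> * (\<Sum>i<length \<sigma>. (-1) ^ i * h (del_nth i \<sigma>)))"
proof -
  let ?C = "{\<sigma>. c \<sigma> \<noteq> 0}"
  let ?S = "(\<Union>\<sigma>\<in>?C. (\<lambda>i. del_nth i \<sigma>) ` {..<length \<sigma>})"
  have finS: "finite ?S" using fin by auto
  have "pair h (bd c) = (\<Sum>\<tau>\<in>?S. bd c \<tau> * h \<tau>)"
    by (rule pair_sup) (use finS supp_bd in auto)
  also have "\<dots> = (\<Sum>\<tau>\<in>?S. \<Sum>\<sigma>\<in>?C. \<Sum>i<length \<sigma>. if del_nth i \<sigma> = \<tau> then (-1) ^ i * c \<sigma> * h \<tau> else 0)"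
    unfolding bd_def by (auto simp: sum_distrib_right intro!: sum.cong)
  also have "\<dots> = (\<Sum>\<sigma>\<in>?C. \<Sum>\<tau>\<in>?S. \<Sum>i<length \<sigma>. if del_nth i \<sigma> = \<tau> then (-1) ^ i * c \<sigma> * h \<tau> else 0)"
    by (rule sum.swap)
  also have "\<dots> = (\<Sum>\<sigma>\<in>?C. \<Sum>i<length \<sigma>. \<Sum>\<tau>\<in>?S. if del_nth i \<sigma> = \<tau> then (-1) ^ i * c \<sigma> * h \<tau> else 0)"
    by (rule sum.cong[OF refl], rule sum.swap)
  also have "\<dots> = (\<Sum>\<sigma>\<in>?C. \<Sum>i<length \<sigma>. (-1) ^ i * c \<sigma> * h (del_nth i \<sigma>))"
  proof (intro sum.cong refl)
    fix \<sigma> i assume "\<sigma> \<in> ?C" "i \<in> {..<length \<sigma>}"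
    then have "del_nth i \<sigma> \<in> ?S" by blast
    then show "(\<Sum>\<tau>\<in>?S. if del_nth i \<sigma> = \<tau> then (-1) ^ i * c \<sigma> * h \<tau> else 0) = (-1) ^ i * c \<sigma> * h (del_nth i \<sigma>)"
      using finS by (simp add: sum.delta)
  qed
  also have "\<dots> = (\<Sum>\<sigma>\<in>?C. c \<sigma> * (\<Sum>i<length \<sigma>. (-1) ^ i * h (del_nth i \<sigma>)))"
    by (auto intro!: sum.cong simp: sum_distrib_left mult_ac)
  finally show ?thesis .
qed

lemma pair_add:
  assumes "finite {\<sigma>. c \<sigma> \<noteq> 0}" "finite {\<sigma>. d \<sigma> \<noteq> 0}"
  shows "pair h (\<lambda>\<sigma>. c \<sigma> + d \<sigma>) = pair h c + pair h d"
proof -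
  let ?S = "{\<sigma>. c \<sigma> \<noteq> 0} \<union> {\<sigma>. d \<sigma> \<noteq> 0}"
  have f: "finite ?S" using assms by auto
  have "pair h (\<lambda>\<sigma>. c \<sigma> + d \<sigma>) = (\<Sum>\<sigma>\<in>?S. (c \<sigma> + d \<sigma>) * h \<sigma>)"
    by (rule pair_sup[OF f]) auto
  also have "\<dots> = (\<Sum>\<sigma>\<in>?S. c \<sigma> * h \<sigma>) + (\<Sum>\<sigma>\<in>?S. d \<sigma> * h \<sigma>)"
    by (simp add: distrib_right sum.distrib)
  also have "\<dots> = pair h c + pair h d"
    using pair_sup[OF f, of c h] pair_sup[OF f, of d h] by auto
  finally show ?thesis .
qed


lemma del_nth_0[simp]: "del_nth 0 (x # xs) = xs"
  by (simp add: del_nth_def)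

lemma del_nth_Suc[simp]: "del_nth (Suc i) (x # xs) = x # del_nth i xs"
  by (simp add: del_nth_def)

lemma length_del_nth: "i < length xs \<Longrightarrow> length (del_nth i xs) = length xs - 1"
  by (simp add: del_nth_def)

lemma set_del_nth: "set (del_nth i xs) \<subseteq> set xs"
  unfolding del_nth_def using set_take_subset set_drop_subset by fastforce

lemma map_del_nth: "map p (del_nth i xs) = del_nth i (map p xs)"
  by (simp add: del_nth_def take_map drop_map)

lemma del_del: "i \<le> l \<Longrightarrow> del_nth l (del_nth i xs) = del_nth i (del_nth (Suc l) xs)"
proof (induction xs arbitrary: i l)
  case Nil
  then show ?case by (simp add: del_nth_def)
next
  case (Cons x xs)
  show ?case
  proof (cases i)
    case 0
    then show ?thesis by simp
  next
    case (Suc i')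
    then obtain l' where l: "l = Suc l'" using Cons.prems by (cases l) auto
    then show ?thesis using Cons Suc by simp
  qed
qed

lemma nerve_del:
  assumes "\<sigma> \<in> nerve_simp U (Suc k)" "i < Suc (Suc k)"
  shows "del_nth i \<sigma> \<in> nerve_simp U k"
proof -
  have l: "length \<sigma> = Suc (Suc k)" using assms unfolding nerve_simp_def by simp
  have sub: "\<Inter>(set \<sigma>) \<subseteq> \<Inter>(set (del_nth i \<sigma>))" by (rule Inter_anti_mono[OF set_del_nth])
  have ne: "\<Inter>(set \<sigma>) \<noteq> {}" "set \<sigma> \<subseteq> U" using assms unfolding nerve_simp_def by auto
  have "length (del_nth i \<sigma>) = Suc k" using l assms(2) by (simp add: length_del_nth)
  moreover have "set (del_nth i \<sigma>) \<subseteq> U" using ne(2) set_del_nth[of i \<sigma>] by (rule order_trans[rotated])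
  moreover have "\<Inter>(set (del_nth i \<sigma>)) \<noteq> {}" using ne(1) sub by blast
  ultimately show ?thesis unfolding nerve_simp_def by simp
qed

lemma nerve_inter_sub:
  assumes "\<sigma> \<in> nerve_simp U k"
  shows "\<Inter>(set \<sigma>) \<subseteq> \<Inter>(set (del_nth i \<sigma>))"
  by (rule Inter_anti_mono[OF set_del_nth])

lemma nerve_map:
  assumes "is_proj V U p" "\<sigma> \<in> nerve_simp V k"
  shows "map p \<sigma> \<in> nerve_simp U k"
    and "\<Inter>(set \<sigma>) \<subseteq> \<Inter>(set (map p \<sigma>))"
proof -
  show sub: "\<Inter>(set \<sigma>) \<subseteq> \<Inter>(set (map p \<sigma>))"
    using assms unfolding is_proj_def nerve_simp_def by auto
  show "map p \<sigma> \<in> nerve_simp U k"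
    using assms sub unfolding is_proj_def nerve_simp_def by auto
qed

lemma finite_nerve: "finite U \<Longrightarrow> finite (nerve_simp U k)"
  unfolding nerve_simp_def
  by (rule finite_subset[OF _ finite_lists_length_eq[of U "Suc k"]]) auto

section \<open>Coboundary squared\<close>

lemma dd_zero:
  fixes g :: "'b list \<Rightarrow> 'g::comm_ring_1"
  shows "(\<Sum>i<Suc n. \<Sum>l<n. (-1) ^ (i + l) * g (del_nth l (del_nth i xs))) = 0"
proof -
  define t where "t = (\<lambda>(i, l). (-1::'g) ^ (i + l) * g (del_nth l (del_nth i xs)))"
  let ?P = "{..<Suc n} \<times> {..<n}"
  define A where "A = {(i, l). i \<le> l \<and> l < n}"
  define B where "B = {(i, l). l < i \<and> i < Suc n}"
  have PAB: "?P = A \<union> B" unfolding A_def B_def by auto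
  have disj: "A \<inter> B = {}" unfolding A_def B_def by auto
  have finA: "finite A" by (rule finite_subset[of _ ?P]) (auto simp: A_def)
  have finB: "finite B" by (rule finite_subset[of _ ?P]) (auto simp: B_def)
  define h where "h = (\<lambda>(i::nat, l::nat). (Suc l, i))"
  define h' where "h' = (\<lambda>(i::nat, l::nat). (l, i - 1))"
  have bij: "bij_betw h A B"
    by (rule bij_betw_byWitness[where f'=h']) (auto simp: A_def B_def h_def h'_def)
  have th: "t (h x) = - t x" if xA: "x \<in> A" for x
  proof -
    obtain i l where x: "x = (i, l)" "i \<le> l" using xA unfolding A_def by blast
    have "t (h x) = (-1) ^ (Suc l + i) * g (del_nth i (del_nth (Suc l) xs))"
      by (simp add: t_def h_def x)
    also have "\<dots> = (-1) ^ (Suc l + i) * g (del_nth l (del_nth i xs))"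
      by (simp only: del_del[OF x(2)])
    also have "\<dots> = - t x" by (simp add: t_def x add.commute)
    finally show ?thesis .
  qed
  have "(\<Sum>i<Suc n. \<Sum>l<n. (-1) ^ (i + l) * g (del_nth l (del_nth i xs))) = sum t ?P"
    unfolding t_def by (simp add: sum.cartesian_product)
  also have "\<dots> = sum t A + sum t B"
    unfolding PAB by (rule sum.union_disjoint[OF finA finB disj])
  also have "sum t B = (\<Sum>x\<in>A. t (h x))"
    by (rule sum.reindex_bij_betw[OF bij, symmetric])
  also have "\<dots> = (\<Sum>x\<in>A. - t x)" by (rule sum.cong) (auto simp: th)
  finally show ?thesis by (simp add: sum_negf)
qed

lemma cobd_cobd: "cobd U (Suc k) (cobd U k f) = (\<lambda>_. 0)"
proof
  fix \<sigma>
  show "cobd U (Suc k) (cobd U k f) \<sigma> = 0"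
  proof (cases "\<sigma> \<in> nerve_simp U (Suc (Suc k))")
    case True
    have "cobd U (Suc k) (cobd U k f) \<sigma> =
        (\<Sum>i<Suc (Suc (Suc k)). (-1) ^ i * cobd U k f (del_nth i \<sigma>))"
      using True by (simp add: cobd_def)
    also have "\<dots> = (\<Sum>i<Suc (Suc (Suc k)). \<Sum>l<Suc (Suc k).
          (-1) ^ (i + l) * f (del_nth l (del_nth i \<sigma>)))"
    proof (rule sum.cong[OF refl])
      fix i assume "i \<in> {..<Suc (Suc (Suc k))}"
      then have "del_nth i \<sigma> \<in> nerve_simp U (Suc k)" using nerve_del[OF True] by simp
      then show "(-1) ^ i * cobd U k f (del_nth i \<sigma>) = (\<Sum>l<Suc (Suc k).
          (-1) ^ (i + l) * f (del_nth l (del_nth i \<sigma>)))"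
        by (simp add: cobd_def sum_distrib_left power_add mult.assoc del: sum.lessThan_Suc)
    qed
    also have "\<dots> = 0" by (rule dd_zero)
    finally show ?thesis .
  next
    case False
    then show ?thesis by (simp add: cobd_def)
  qed
qed

lemma cobd_pull:
  assumes "is_proj V U p"
  shows "cobd V k (pull V k p f) = pull V (Suc k) p (cobd U k f)"
proof
  fix \<sigma>
  show "cobd V k (pull V k p f) \<sigma> = pull V (Suc k) p (cobd U k f) \<sigma>"
  proof (cases "\<sigma> \<in> nerve_simp V (Suc k)")
    case True
    have m: "map p \<sigma> \<in> nerve_simp U (Suc k)" using nerve_map(1)[OF assms True] .
    have "cobd V k (pull V k p f) \<sigma> = (\<Sum>i<Suc (Suc k). (-1) ^ i * f (map p (del_nth i \<sigma>)))"
      using True nerve_del[OF True] by (simp add: cobd_def pull_def)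
    also have "\<dots> = pull V (Suc k) p (cobd U k f) \<sigma>"
      using True m by (simp add: cobd_def pull_def map_del_nth)
    finally show ?thesis .
  next
    case False
    then show ?thesis by (simp add: cobd_def pull_def)
  qed
qed

lemma cobd_diff: "cobd U k (\<lambda>\<tau>. x \<tau> - y \<tau>) = (\<lambda>\<sigma>. cobd U k x \<sigma> - cobd U k y \<sigma>)"
  unfolding cobd_def by (rule ext) (simp add: sum_subtractf right_diff_distrib)

lemma functional_exists:
  fixes B :: "('b \<Rightarrow> 'g::field) set" and c0 :: "'b \<Rightarrow> 'g"
  assumes B0: "0 \<in> B" and Badd: "\<And>x y. x \<in> B \<Longrightarrow> y \<in> B \<Longrightarrow> x + y \<in> B"
    and Bsc: "\<And>r x. x \<in> B \<Longrightarrow> (\<lambda>s. r * x s) \<in> B" and c0: "c0 \<notin> B"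
  shows "\<exists>\<phi>. (\<forall>x y. \<phi> (x + y) = \<phi> x + \<phi> y) \<and> (\<forall>r x. \<phi> (\<lambda>s. r * x s) = r * \<phi> x)
     \<and> \<phi> c0 = 1 \<and> (\<forall>b\<in>B. \<phi> b = 0)"
proof -
  define sc :: "'g \<Rightarrow> ('b \<Rightarrow> 'g) \<Rightarrow> ('b \<Rightarrow> 'g)" where "sc = (\<lambda>r x s. r * x s)"
  interpret V: vector_space sc
    by unfold_locales (auto simp: sc_def fun_eq_iff algebra_simps)
  interpret P: vector_space_pair sc "(*) :: 'g \<Rightarrow> 'g \<Rightarrow> 'g"
    by unfold_locales (auto simp: algebra_simps)
  have subB: "V.subspace B"
    unfolding V.subspace_def using B0 Badd Bsc by (auto simp: sc_def)
  obtain I where I: "I \<subseteq> B" "V.independent I" "B \<subseteq> V.span I"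
    using V.maximal_independent_subset by blast
  have spanI: "V.span I \<subseteq> B" using V.span_minimal[OF I(1) subB] .
  have c0I: "c0 \<notin> V.span I" using spanI c0 by blast
  have ind: "V.independent (insert c0 I)" using V.independent_insertI[OF c0I I(2)] .
  define \<phi> where "\<phi> = P.construct (insert c0 I) (\<lambda>x. if x = c0 then 1 else 0)"
  have lin: "Vector_Spaces.linear sc (*) \<phi>" unfolding \<phi>_def by (rule P.linear_construct[OF ind])
  interpret L: Vector_Spaces.linear sc "(*)" \<phi> by (rule lin)
  have c1: "\<phi> c0 = 1" unfolding \<phi>_def by (subst P.construct_basis[OF ind]) auto
  have zI: "\<phi> x = 0" if "x \<in> I" for x
    unfolding \<phi>_def using that c0I V.span_base[OF that]
    by (subst P.construct_basis[OF ind]) auto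
  have zB: "\<phi> b = 0" if "b \<in> B" for b
  proof -
    have "b \<in> V.span I" using I(3) that by blast
    then show ?thesis
    proof (induction rule: V.span_induct_alt)
      case base then show ?case using L.zero by (simp add: zero_fun_def)
    next
      case (step c x y)
      have "\<phi> (sc c x + y) = c * \<phi> x + \<phi> y" by (simp only: L.add L.scale)
      then have "\<phi> (sc c x + y) = 0" using zI step by simp
      then show ?case by (simp add: plus_fun_def)
    qed
  qed
  show ?thesis
  proof (intro exI[of _ \<phi>] conjI allI ballI)
    fix x y show "\<phi> (x + y) = \<phi> x + \<phi> y" by (rule L.add)
  next
    fix r x show "\<phi> (\<lambda>s. r * x s) = r * \<phi> x" using L.scale[of r x] by (simp add: sc_def)
  next
    show "\<phi> c0 = 1" by (rule c1)
  next
    fix b assume "b \<in> B" then show "\<phi> b = 0" by (rule zB)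
  qed
qed

section \<open>Chains and boundaries\<close>

lemma chains_zero: "(\<lambda>_. 0) \<in> chains U k"
  by (simp add: chains_def)

lemma chains_add: "x \<in> chains U k \<Longrightarrow> y \<in> chains U k \<Longrightarrow> (\<lambda>\<sigma>. x \<sigma> + y \<sigma>) \<in> chains U k"
proof -
  assume x: "x \<in> chains U k" and y: "y \<in> chains U k"
  have "{\<sigma>. x \<sigma> + y \<sigma> \<noteq> 0} \<subseteq> {\<sigma>. x \<sigma> \<noteq> 0} \<union> {\<sigma>. y \<sigma> \<noteq> 0}" by auto
  moreover have "finite ({\<sigma>. x \<sigma> \<noteq> 0} \<union> {\<sigma>. y \<sigma> \<noteq> 0})" using x y by (simp add: chains_def)
  ultimately have "finite {\<sigma>. x \<sigma> + y \<sigma> \<noteq> 0}" by (rule finite_subset)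
  moreover have "\<forall>\<sigma>. x \<sigma> + y \<sigma> \<noteq> 0 \<longrightarrow> \<sigma> \<in> nerve_simp U k"
  proof (intro allI impI)
    fix \<sigma> assume "x \<sigma> + y \<sigma> \<noteq> 0"
    then have "x \<sigma> \<noteq> 0 \<or> y \<sigma> \<noteq> 0" by auto
    then show "\<sigma> \<in> nerve_simp U k" using x y unfolding chains_def by blast
  qed
  ultimately show ?thesis by (simp add: chains_def)
qed

lemma chains_scale: "x \<in> chains U k \<Longrightarrow> (\<lambda>\<sigma>. r * x \<sigma>) \<in> chains U k"
proof -
  assume x: "x \<in> chains U k"
  have "{\<sigma>. r * x \<sigma> \<noteq> 0} \<subseteq> {\<sigma>. x \<sigma> \<noteq> 0}" by auto
  then have "finite {\<sigma>. r * x \<sigma> \<noteq> 0}" using x by (auto simp: chains_def intro: finite_subset)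
  then show ?thesis using x by (auto simp: chains_def)
qed

lemma chains_fin: "x \<in> chains U k \<Longrightarrow> finite {\<sigma>. x \<sigma> \<noteq> 0}"
  by (simp add: chains_def)

lemma chains_supp: "x \<in> chains U k \<Longrightarrow> x \<sigma> \<noteq> 0 \<Longrightarrow> \<sigma> \<in> nerve_simp U k"
  by (simp add: chains_def)

lemma bd_add:
  assumes "finite {\<sigma>. x \<sigma> \<noteq> 0}" "finite {\<sigma>. y \<sigma> \<noteq> 0}"
  shows "bd (\<lambda>\<sigma>. x \<sigma> + y \<sigma>) = (\<lambda>\<tau>. bd x \<tau> + bd y \<tau>)"
proof
  fix \<tau>
  let ?S = "{\<sigma>. x \<sigma> \<noteq> 0} \<union> {\<sigma>. y \<sigma> \<noteq> 0}"
  have f: "finite ?S" using assms by simp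
  have "bd (\<lambda>\<sigma>. x \<sigma> + y \<sigma>) \<tau> = (\<Sum>\<sigma>\<in>?S. \<Sum>i<length \<sigma>. if del_nth i \<sigma> = \<tau> then (-1) ^ i * (x \<sigma> + y \<sigma>) else 0)"
    by (rule bd_sup[OF f]) auto
  also have "\<dots> = (\<Sum>\<sigma>\<in>?S. \<Sum>i<length \<sigma>. if del_nth i \<sigma> = \<tau> then (-1) ^ i * x \<sigma> else 0)
      + (\<Sum>\<sigma>\<in>?S. \<Sum>i<length \<sigma>. if del_nth i \<sigma> = \<tau> then (-1) ^ i * y \<sigma> else 0)"
    by (simp add: sum.distrib[symmetric] distrib_left if_distrib cong: if_cong)
  also have "\<dots> = bd x \<tau> + bd y \<tau>"
    using bd_sup[OF f, of x \<tau>] bd_sup[OF f, of y \<tau>] by auto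
  finally show "bd (\<lambda>\<sigma>. x \<sigma> + y \<sigma>) \<tau> = bd x \<tau> + bd y \<tau>" .
qed

lemma bd_scale:
  assumes "finite {\<sigma>. x \<sigma> \<noteq> 0}"
  shows "bd (\<lambda>\<sigma>. r * x \<sigma>) = (\<lambda>\<tau>. r * bd x \<tau>)"
proof
  fix \<tau>
  let ?S = "{\<sigma>. x \<sigma> \<noteq> 0}"
  have "bd (\<lambda>\<sigma>. r * x \<sigma>) \<tau> = (\<Sum>\<sigma>\<in>?S. \<Sum>i<length \<sigma>. if del_nth i \<sigma> = \<tau> then (-1) ^ i * (r * x \<sigma>) else 0)"
    by (rule bd_sup[OF assms]) auto
  also have "\<dots> = r * (\<Sum>\<sigma>\<in>?S. \<Sum>i<length \<sigma>. if del_nth i \<sigma> = \<tau> then (-1) ^ i * x \<sigma> else 0)"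
    by (simp add: sum_distrib_left if_distrib mult.left_commute cong: if_cong)
  also have "\<dots> = r * bd x \<tau>" using bd_sup[OF assms, of x \<tau>] by auto
  finally show "bd (\<lambda>\<sigma>. r * x \<sigma>) \<tau> = r * bd x \<tau>" .
qed

lemma bd_zero: "bd (\<lambda>_. 0) = (\<lambda>_. 0)"
  by (rule ext) (simp add: bd_def)

lemma bd_chains:
  assumes "e \<in> chains U (Suc k)"
  shows "bd e \<in> chains U k"
proof -
  have f: "finite {\<tau>. bd e \<tau> \<noteq> 0}" using fin_bd chains_fin[OF assms] by blast
  have "\<tau> \<in> nerve_simp U k" if "bd e \<tau> \<noteq> 0" for \<tau>
  proof -
    have "\<tau> \<in> (\<Union>\<sigma>\<in>{\<sigma>. e \<sigma> \<noteq> 0}. (\<lambda>i. del_nth i \<sigma>) ` {..<length \<sigma>})"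
      using supp_bd[of e] that by blast
    then obtain \<sigma> i where s: "e \<sigma> \<noteq> 0" "i < length \<sigma>" "\<tau> = del_nth i \<sigma>" by blast
    have n: "\<sigma> \<in> nerve_simp U (Suc k)" using chains_supp[OF assms s(1)] .
    then have "length \<sigma> = Suc (Suc k)" by (simp add: nerve_simp_def)
    then show ?thesis using nerve_del[OF n] s by simp
  qed
  then show ?thesis using f by (simp add: chains_def)
qed

lemma boundaries_add:
  assumes "x \<in> boundaries U k" "y \<in> boundaries U k"
  shows "(\<lambda>\<sigma>. x \<sigma> + y \<sigma>) \<in> boundaries U k"
proof -
  obtain e e' where e: "e \<in> chains U (Suc k)" "x = bd e" "e' \<in> chains U (Suc k)" "y = bd e'"
    using assms unfolding boundaries_def by blast
  have "(\<lambda>\<sigma>. x \<sigma> + y \<sigma>) = bd (\<lambda>\<sigma>. e \<sigma> + e' \<sigma>)"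
    using bd_add[OF chains_fin[OF e(1)] chains_fin[OF e(3)]] e by simp
  then show ?thesis unfolding boundaries_def using chains_add[OF e(1) e(3)] by blast
qed

lemma boundaries_scale:
  assumes "x \<in> boundaries U k"
  shows "(\<lambda>\<sigma>. r * x \<sigma>) \<in> boundaries U k"
proof -
  obtain e where e: "e \<in> chains U (Suc k)" "x = bd e"
    using assms unfolding boundaries_def by blast
  have "(\<lambda>\<sigma>. r * x \<sigma>) = bd (\<lambda>\<sigma>. r * e \<sigma>)"
    using bd_scale[OF chains_fin[OF e(1)]] e by simp
  then show ?thesis unfolding boundaries_def using chains_scale[OF e(1)] by blast
qed

lemma boundaries_zero: "(\<lambda>_. 0) \<in> boundaries U k"
proof -
  have "bd (\<lambda>_. 0) \<in> bd ` chains U (Suc k)" using chains_zero by (rule imageI)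
  then show ?thesis unfolding boundaries_def bd_zero .
qed

lemma boundaries_chains: "x \<in> boundaries U k \<Longrightarrow> x \<in> chains U k"
  unfolding boundaries_def using bd_chains by blast

lemma hclass_bound:
  fixes c :: "'a set list \<Rightarrow> 'g::field"
  assumes "c \<in> boundaries U k"
  shows "hclass U k c = boundaries U k"
proof
  show "hclass U k c \<subseteq> boundaries U k"
  proof
    fix x assume "x \<in> hclass U k c"
    then obtain b where "b \<in> boundaries U k" "x = (\<lambda>\<sigma>. c \<sigma> + b \<sigma>)" unfolding hclass_def by blast
    then show "x \<in> boundaries U k" using boundaries_add[OF assms] by simp
  qed
  show "boundaries U k \<subseteq> hclass U k c"
  proof
    fix b :: "'a set list \<Rightarrow> 'g" assume b: "b \<in> boundaries U k"
    have "(\<lambda>\<sigma>. b \<sigma> + (-1) * c \<sigma>) \<in> boundaries U k"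
      using boundaries_add[OF b boundaries_scale[OF assms, of "-1"]] .
    moreover have "b = (\<lambda>\<sigma>. c \<sigma> + (b \<sigma> + (-1) * c \<sigma>))" by auto
    ultimately show "b \<in> hclass U k c" unfolding hclass_def by (intro CollectI exI[of _ "(\<lambda>\<sigma>. b \<sigma> + (-1) * c \<sigma>)"]) simp
  qed
qed

section \<open>Separating cochain\<close>

lemma phi_sum:
  fixes \<phi> :: "('b \<Rightarrow> 'g::field) \<Rightarrow> 'g"
  assumes add: "\<And>x y. \<phi> (x + y) = \<phi> x + \<phi> y"
    and sc: "\<And>r x. \<phi> (\<lambda>s. r * x s) = r * \<phi> x"
    and fin: "finite S"
  shows "\<forall>c. {\<sigma>. c \<sigma> \<noteq> 0} \<subseteq> S \<longrightarrow> \<phi> c = (\<Sum>\<sigma>\<in>S. c \<sigma> * \<phi> (\<lambda>\<tau>. if \<tau> = \<sigma> then 1 else 0))"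
  using fin
proof (induction S rule: finite_induct)
  case empty
  have "\<phi> (\<lambda>s. 0 * (0::'b\<Rightarrow>'g) s) = 0 * \<phi> 0" by (rule sc)
  then have z: "\<phi> 0 = 0" by (simp add: zero_fun_def)
  show ?case
  proof (intro allI impI)
    fix c :: "'b \<Rightarrow> 'g" assume "{\<sigma>. c \<sigma> \<noteq> 0} \<subseteq> {}"
    then have "c = 0" by (auto simp: fun_eq_iff)
    then show "\<phi> c = (\<Sum>\<sigma>\<in>{}. c \<sigma> * \<phi> (\<lambda>\<tau>. if \<tau> = \<sigma> then 1 else 0))" using z by simp
  qed
next
  case (insert x S)
  show ?case
  proof (intro allI impI)
    fix c :: "'b \<Rightarrow> 'g" assume cs: "{\<sigma>. c \<sigma> \<noteq> 0} \<subseteq> insert x S"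
    define c' where "c' = c(x := 0)"
    have c'S: "{\<sigma>. c' \<sigma> \<noteq> 0} \<subseteq> S" using cs by (auto simp: c'_def)
    have dec: "c = c' + (\<lambda>\<tau>. c x * (if \<tau> = x then 1 else 0))"
      by (auto simp: fun_eq_iff c'_def)
    have "\<phi> c = \<phi> c' + c x * \<phi> (\<lambda>\<tau>. if \<tau> = x then 1 else 0)"
      by (subst dec) (simp add: add sc)
    also have "\<phi> c' = (\<Sum>\<sigma>\<in>S. c' \<sigma> * \<phi> (\<lambda>\<tau>. if \<tau> = \<sigma> then 1 else 0))"
      using insert.IH c'S by blast
    also have "\<dots> = (\<Sum>\<sigma>\<in>S. c \<sigma> * \<phi> (\<lambda>\<tau>. if \<tau> = \<sigma> then 1 else 0))"
      using insert.hyps(2) by (intro sum.cong) (auto simp: c'_def)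
    finally show "\<phi> c = (\<Sum>\<sigma>\<in>insert x S. c \<sigma> * \<phi> (\<lambda>\<tau>. if \<tau> = \<sigma> then 1 else 0))"
      using insert.hyps by (simp add: add.commute)
  qed
qed

lemma separating_cochain:
  fixes c0 :: "'a set list \<Rightarrow> 'g::field"
  assumes c0: "c0 \<in> chains W j" "c0 \<notin> boundaries W j"
  shows "\<exists>a::'a set list \<Rightarrow> 'g. pair a c0 \<noteq> 0 \<and> (\<forall>e\<in>chains W (Suc j). pair a (bd e) = 0)"
proof -
  have B0: "0 \<in> boundaries W j" using boundaries_zero by (simp add: zero_fun_def)
  have Badd: "x + y \<in> boundaries W j" if "x \<in> boundaries W j" "y \<in> boundaries W j" for x y
    using boundaries_add[OF that] by (simp add: plus_fun_def)
  obtain \<phi> where \<phi>: "\<And>x y. \<phi> (x + y) = \<phi> x + \<phi> y" "\<And>r x. \<phi> (\<lambda>s. r * x s) = r * \<phi> x"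
      "\<phi> c0 = 1" "\<And>b. b \<in> boundaries W j \<Longrightarrow> \<phi> b = 0"
    using functional_exists[of "boundaries W j" c0, OF B0 Badd boundaries_scale c0(2)] by blast
  define a where "a = (\<lambda>\<sigma>. \<phi> (\<lambda>\<tau>. if \<tau> = \<sigma> then 1 else 0))"
  have pa: "\<phi> c = pair a c" if "finite {\<sigma>. c \<sigma> \<noteq> 0}" for c
    using phi_sum[OF \<phi>(1,2) that] unfolding pair_def a_def by blast
  show ?thesis
  proof (intro exI conjI ballI)
    show "pair a c0 \<noteq> 0" using pa[OF chains_fin[OF c0(1)]] \<phi>(3) by simp
    fix e :: "'a set list \<Rightarrow> 'g" assume e: "e \<in> chains W (Suc j)"
    have "bd e \<in> boundaries W j" using e unfolding boundaries_def by blast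
    then show "pair a (bd e) = 0" using pa[OF fin_bd[OF chains_fin[OF e]]] \<phi>(4) by simp
  qed
qed


lemma main_lemma:
  fixes X F :: "'a::topological_space set" and \<gamma> :: "'a set set \<Rightarrow> ('a set list \<Rightarrow> 'g::field) set"
  assumes F: "closed F" "F \<subseteq> X"
    and \<gamma>: "\<gamma> \<in> cech_homology TYPE('g) F j" "\<not> cech_zero F j \<gamma>" "incl_image_zero F X j \<gamma>"
  shows "cech_cohom_nonzero TYPE('g) X F (Suc j)"
proof -
  from \<gamma>(2) obtain W where W: "open_cover F W" "\<gamma> W \<noteq> boundaries W j"
    unfolding cech_zero_def by blast
  have \<gamma>W: "\<gamma> W \<in> nerve_homology W j" using \<gamma>(1) W(1) unfolding cech_homology_def by blast
  then obtain c0 where c0: "c0 \<in> cycles W j" "\<gamma> W = hclass W j c0"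
    unfolding nerve_homology_def by blast
  have c0ch: "c0 \<in> chains W j" using c0(1) by (simp add: cycles_def)
  have c0nb: "c0 \<notin> boundaries W j"
  proof
    assume "c0 \<in> boundaries W j"
    then have "hclass W j c0 = boundaries W j" by (rule hclass_bound)
    then show False using c0(2) W(2) by simp
  qed
  obtain a :: "'a set list \<Rightarrow> 'g" where a: "pair a c0 \<noteq> 0" "\<forall>e\<in>chains W (Suc j). pair a (bd e) = 0"
    using separating_cochain[OF c0ch c0nb] by blast
  have acoc: "(\<Sum>i<Suc (Suc j). (-1) ^ i * a (del_nth i \<tau>)) = 0" if \<tau>: "\<tau> \<in> nerve_simp W (Suc j)" for \<tau>
  proof -
    define e where "e = (\<lambda>\<sigma>. if \<sigma> = \<tau> then (1::'g) else 0)"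
    have sup: "{\<sigma>. e \<sigma> \<noteq> 0} = {\<tau>}" by (auto simp: e_def)
    have "e \<in> chains W (Suc j)" using \<tau> by (auto simp: chains_def e_def)
    then have "pair a (bd e) = 0" using a(2) by blast
    moreover have "length \<tau> = Suc (Suc j)" using \<tau> by (simp add: nerve_simp_def)
    moreover have "pair a (bd e) = (\<Sum>\<sigma>\<in>{\<tau>}. e \<sigma> * (\<Sum>i<length \<sigma>. (-1) ^ i * a (del_nth i \<sigma>)))"
      using pair_bd[of e a] sup by simp
    ultimately show ?thesis by (simp add: e_def)
  qed
  have finW: "finite W" using W(1) by (simp add: open_cover_def)
  have Wne: "W \<noteq> {}"
  proof
    assume "W = {}"
    then have "nerve_simp W j = {}" by (auto simp: nerve_simp_def)
    then have "c0 = (\<lambda>_. 0)" using c0ch by (auto simp: chains_def fun_eq_iff)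
    then show False using c0nb boundaries_zero by auto
  qed
  obtain W0 where W0: "W0 \<in> W" using Wne by blast
  have ex: "\<forall>Wm\<in>W. \<exists>T. open T \<and> Wm = F \<inter> T"
    using W(1) unfolding open_cover_def by (auto simp: openin_open)
  obtain Op where Op: "\<forall>Wm\<in>W. open (Op Wm) \<and> Wm = F \<inter> Op Wm"
    using bchoice[OF ex] by blast
  define U where "U = (\<lambda>Wm. X \<inter> Op Wm) ` W \<union> {X - F}"
  have Ucov: "open_cover X U"
    unfolding open_cover_def
  proof (intro conjI ballI)
    show "finite U" using finW by (simp add: U_def)
  next
    fix Um assume "Um \<in> U"
    then consider Wm where "Wm \<in> W" "Um = X \<inter> Op Wm" | "Um = X - F" unfolding U_def by blast
    then show "openin (top_of_set X) Um"
    proof cases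
      case 1
      then show ?thesis using Op by (simp add: openin_open_Int)
    next
      case 2
      have "X - F = X \<inter> (- F)" by blast
      then show ?thesis using 2 F(1) by (simp add: openin_open_Int open_Compl)
    qed
  next
    show "\<Union>U = X"
    proof
      show "\<Union>U \<subseteq> X" unfolding U_def by blast
      show "X \<subseteq> \<Union>U"
      proof
        fix x assume x: "x \<in> X"
        show "x \<in> \<Union>U"
        proof (cases "x \<in> F")
          case True
          then obtain Wm where "Wm \<in> W" "x \<in> Wm" using W(1) unfolding open_cover_def by blast
          then have "x \<in> X \<inter> Op Wm" using Op x by blast
          then show ?thesis unfolding U_def using \<open>Wm \<in> W\<close> by blast
        next
          case False
          then show ?thesis unfolding U_def using x by blast
        qed
      qed
    qed
  qed
  define Q where "Q = (\<lambda>Um. SOME Wm. Wm \<in> W \<and> Um \<inter> F \<subseteq> Wm)"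
  have Q: "Q Um \<in> W \<and> Um \<inter> F \<subseteq> Q Um" if "Um \<in> U" for Um
  proof -
    have "\<exists>Wm. Wm \<in> W \<and> Um \<inter> F \<subseteq> Wm"
    proof -
      from that consider Wm where "Wm \<in> W" "Um = X \<inter> Op Wm" | "Um = X - F" unfolding U_def by blast
      then show ?thesis
      proof cases
        case 1
        then have "Um \<inter> F \<subseteq> Wm" using Op F(2) by blast
        then show ?thesis using 1 by blast
      next
        case 2
        then show ?thesis using W0 by blast
      qed
    qed
    then show ?thesis unfolding Q_def by (rule someI_ex)
  qed
  have mapQ: "map Q \<sigma> \<in> nerve_simp W k \<and> \<Inter>(set \<sigma>) \<inter> F \<subseteq> \<Inter>(set (map Q \<sigma>))"
    if s: "\<sigma> \<in> nerve_simp U k" "\<Inter>(set \<sigma>) \<inter> F \<noteq> {}" for \<sigma> k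
  proof -
    have su: "set \<sigma> \<subseteq> U" "length \<sigma> = Suc k" using s(1) by (auto simp: nerve_simp_def)
    have sub: "\<Inter>(set \<sigma>) \<inter> F \<subseteq> \<Inter>(set (map Q \<sigma>))"
    proof
      fix x assume x: "x \<in> \<Inter>(set \<sigma>) \<inter> F"
      show "x \<in> \<Inter>(set (map Q \<sigma>))"
      proof
        fix Wm assume "Wm \<in> set (map Q \<sigma>)"
        then obtain Um where "Um \<in> set \<sigma>" "Wm = Q Um" by auto
        then show "x \<in> Wm" using Q[of Um] su x by blast
      qed
    qed
    have "set (map Q \<sigma>) \<subseteq> W" using Q su by auto
    then show ?thesis using sub s(2) su unfolding nerve_simp_def by auto
  qed
  define \<beta> where "\<beta> = (\<lambda>\<tau>. if \<tau> \<in> nerve_simp U j \<and> \<Inter>(set \<tau>) \<inter> F \<noteq> {} then a (map Q \<tau>) else (0::'g))"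
  define f where "f = cobd U j \<beta>"
  have fcoc: "f \<in> cocycles U F (Suc j)"
    unfolding cocycles_def
  proof (intro CollectI conjI)
    show "cobd U (Suc j) f = (\<lambda>_. 0)" unfolding f_def by (rule cobd_cobd)
    show "f \<in> cochains U F (Suc j)"
      unfolding cochains_def
    proof (intro CollectI allI impI)
      fix \<sigma> assume f0: "f \<sigma> \<noteq> 0"
      have sn: "\<sigma> \<in> nerve_simp U (Suc j)"
      proof (rule ccontr)
        assume "\<sigma> \<notin> nerve_simp U (Suc j)"
        then have "f \<sigma> = 0" by (simp add: f_def cobd_def)
        then show False using f0 by simp
      qed
      have "\<Inter>(set \<sigma>) \<inter> F = {}"
      proof (rule ccontr)
        assume ne: "\<Inter>(set \<sigma>) \<inter> F \<noteq> {}"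
        have mq: "map Q \<sigma> \<in> nerve_simp W (Suc j)" using mapQ[OF sn ne] by blast
        have "f \<sigma> = (\<Sum>i<Suc (Suc j). (-1) ^ i * \<beta> (del_nth i \<sigma>))"
          using sn by (simp add: f_def cobd_def)
        also have "\<dots> = (\<Sum>i<Suc (Suc j). (-1) ^ i * a (del_nth i (map Q \<sigma>)))"
        proof (rule sum.cong[OF refl])
          fix i assume "i \<in> {..<Suc (Suc j)}"
          then have d: "del_nth i \<sigma> \<in> nerve_simp U j" using nerve_del[OF sn] by simp
          have "\<Inter>(set \<sigma>) \<subseteq> \<Inter>(set (del_nth i \<sigma>))" by (rule nerve_inter_sub[OF sn])
          then have "\<Inter>(set (del_nth i \<sigma>)) \<inter> F \<noteq> {}" using ne by blast
          then show "(-1) ^ i * \<beta> (del_nth i \<sigma>) = (-1) ^ i * a (del_nth i (map Q \<sigma>))"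
            using d by (simp add: \<beta>_def map_del_nth)
        qed
        also have "\<dots> = 0" by (rule acoc[OF mq])
        finally show False using f0 by simp
      qed
      then show "\<sigma> \<in> rel_simp U F (Suc j)" using sn by (simp add: rel_simp_def)
    qed
  qed
  show ?thesis
    unfolding cech_cohom_nonzero_def
  proof (intro exI conjI allI impI)
    show "open_cover X U" by (rule Ucov)
    show "f \<in> cocycles U F (Suc j)" by (rule fcoc)
    fix V p assume Vp: "open_cover X V \<and> is_proj V U p"
    have Vcov: "open_cover X V" and proj: "is_proj V U p" using Vp by auto
    show "\<not> is_cobd V F (Suc j) (pull V (Suc j) p f)"
    proof
      assume "is_cobd V F (Suc j) (pull V (Suc j) p f)"
      then obtain g where g: "g \<in> cochains V F j" "pull V (Suc j) p f = cobd V j g"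
        by (auto simp: is_cobd_def)
      define \<beta>' where "\<beta>' = (\<lambda>\<tau>. pull V j p \<beta> \<tau> - g \<tau>)"
      have \<beta>'coc: "cobd V j \<beta>' = (\<lambda>_. 0)"
        unfolding \<beta>'_def cobd_diff cobd_pull[OF proj] f_def[symmetric] g(2) by simp
      define VF where "VF = (\<lambda>Vm. Vm \<inter> F) ` V"
      have VFcov: "open_cover F VF"
        unfolding open_cover_def
      proof (intro conjI ballI)
        show "finite VF" using Vcov by (simp add: VF_def open_cover_def)
      next
        fix V' assume "V' \<in> VF"
        then obtain Vm where Vm: "Vm \<in> V" "V' = Vm \<inter> F" unfolding VF_def by blast
        then have "openin (top_of_set X) Vm" using Vcov by (simp add: open_cover_def)
        then obtain T where T: "open T" "Vm = X \<inter> T" by (auto simp: openin_open)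
        then have "V' = F \<inter> T" using Vm F(2) by blast
        then show "openin (top_of_set F) V'" using T by (simp add: openin_open_Int)
      next
        have "\<Union>V = X" using Vcov by (simp add: open_cover_def)
        then show "\<Union>VF = F" unfolding VF_def using F(2) by blast
      qed
      define s where "s = (\<lambda>V'. SOME Vm. Vm \<in> V \<and> Vm \<inter> F = V')"
      have s: "s V' \<in> V \<and> s V' \<inter> F = V'" if "V' \<in> VF" for V'
      proof -
        have "\<exists>Vm. Vm \<in> V \<and> Vm \<inter> F = V'" using that unfolding VF_def by blast
        then show ?thesis unfolding s_def by (rule someI_ex)
      qed
      have sproj: "is_proj VF V s" unfolding is_proj_def using s by blast
      have VFF: "V' \<subseteq> F" if "V' \<in> VF" for V' using that unfolding VF_def by blast
      have "\<gamma> VF \<in> nerve_homology VF j" using \<gamma>(1) VFcov unfolding cech_homology_def by blast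
      then obtain c1 where c1: "c1 \<in> cycles VF j" "\<gamma> VF = hclass VF j c1"
        unfolding nerve_homology_def by blast
      have c1ch: "c1 \<in> chains VF j" using c1(1) by (simp add: cycles_def)
      have c1in: "c1 \<in> \<gamma> VF"
        unfolding c1(2) hclass_def
        by (intro CollectI exI[of _ "\<lambda>_. 0"]) (simp add: boundaries_zero)
      have "push s c1 \<in> boundaries V j"
        using \<gamma>(3) Vcov sproj c1in unfolding incl_image_zero_def VF_def by blast
      then obtain e where e: "e \<in> chains V (Suc j)" "push s c1 = bd e"
        unfolding boundaries_def by blast
      have zero: "pair \<beta>' (push s c1) = 0"
      proof -
        have "pair \<beta>' (bd e) = (\<Sum>\<sigma>\<in>{\<sigma>. e \<sigma> \<noteq> 0}. e \<sigma> * (\<Sum>i<length \<sigma>. (-1) ^ i * \<beta>' (del_nth i \<sigma>)))"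
          by (rule pair_bd[OF chains_fin[OF e(1)]])
        also have "\<dots> = (\<Sum>\<sigma>\<in>{\<sigma>. e \<sigma> \<noteq> 0}. 0)"
        proof (rule sum.cong[OF refl])
          fix \<sigma> assume "\<sigma> \<in> {\<sigma>. e \<sigma> \<noteq> 0}"
          then have sn: "\<sigma> \<in> nerve_simp V (Suc j)" using chains_supp[OF e(1)] by blast
          then have "length \<sigma> = Suc (Suc j)" by (simp add: nerve_simp_def)
          then have "(\<Sum>i<length \<sigma>. (-1) ^ i * \<beta>' (del_nth i \<sigma>)) = cobd V j \<beta>' \<sigma>"
            using sn by (simp add: cobd_def)
          then show "e \<sigma> * (\<Sum>i<length \<sigma>. (-1) ^ i * \<beta>' (del_nth i \<sigma>)) = 0"
            using \<beta>'coc by simp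
        qed
        finally show ?thesis using e(2) by simp
      qed
      define r where "r = (\<lambda>V'. Q (p (s V')))"
      have rproj: "is_proj VF W r"
        unfolding is_proj_def
      proof
        fix V' assume V': "V' \<in> VF"
        have sv: "s V' \<in> V" "s V' \<inter> F = V'" using s[OF V'] by auto
        have pv: "p (s V') \<in> U" "s V' \<subseteq> p (s V')" using proj sv(1) unfolding is_proj_def by auto
        have "V' \<subseteq> p (s V') \<inter> F" using sv pv VFF[OF V'] by blast
        then show "r V' \<in> W \<and> V' \<subseteq> r V'" using Q[OF pv(1)] unfolding r_def by blast
      qed
      have pt: "\<beta>' (map s \<sigma>) = a (map r \<sigma>)" if sn: "\<sigma> \<in> nerve_simp VF j" for \<sigma>
      proof -
        have ms: "map s \<sigma> \<in> nerve_simp V j" "\<Inter>(set \<sigma>) \<subseteq> \<Inter>(set (map s \<sigma>))"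
          using nerve_map[OF sproj sn] by auto
        have mps: "map p (map s \<sigma>) \<in> nerve_simp U j" "\<Inter>(set (map s \<sigma>)) \<subseteq> \<Inter>(set (map p (map s \<sigma>)))"
          using nerve_map[OF proj ms(1)] by auto
        have I: "\<Inter>(set \<sigma>) \<noteq> {}" "length \<sigma> = Suc j" "set \<sigma> \<subseteq> VF" using sn by (auto simp: nerve_simp_def)
        then obtain V0 where "V0 \<in> set \<sigma>" by (cases \<sigma>) auto
        then have "\<Inter>(set \<sigma>) \<subseteq> F" using VFF I(3) by blast
        then have IF: "\<Inter>(set \<sigma>) \<inter> F \<noteq> {}" using I(1) by blast
        have n1: "\<Inter>(set (map s \<sigma>)) \<inter> F \<noteq> {}" using IF ms(2) by blast
        have n2: "\<Inter>(set (map p (map s \<sigma>))) \<inter> F \<noteq> {}" using n1 mps(2) by blast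
        have g0: "g (map s \<sigma>) = 0"
        proof (rule ccontr)
          assume "g (map s \<sigma>) \<noteq> 0"
          then have "map s \<sigma> \<in> rel_simp V F j" using g(1) by (simp add: cochains_def)
          then show False using n1 by (simp add: rel_simp_def)
        qed
        have "pull V j p \<beta> (map s \<sigma>) = \<beta> (map p (map s \<sigma>))" using ms(1) by (simp add: pull_def)
        also have "\<dots> = a (map Q (map p (map s \<sigma>)))" using mps(1) n2 by (simp add: \<beta>_def)
        also have "\<dots> = a (map r \<sigma>)" by (simp add: r_def comp_def)
        finally show ?thesis using g0 by (simp add: \<beta>'_def)
      qed
      have finc1: "finite {\<sigma>. c1 \<sigma> \<noteq> 0}" by (rule chains_fin[OF c1ch])
      have eq: "pair \<beta>' (push s c1) = pair a (push r c1)"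
      proof -
        have "pair \<beta>' (push s c1) = pair (\<lambda>\<sigma>. \<beta>' (map s \<sigma>)) c1" by (rule pair_push[OF finc1])
        also have "\<dots> = pair (\<lambda>\<sigma>. a (map r \<sigma>)) c1"
          unfolding pair_def
        proof (rule sum.cong[OF refl])
          fix \<sigma> assume "\<sigma> \<in> {\<sigma>. c1 \<sigma> \<noteq> 0}"
          then have "\<sigma> \<in> nerve_simp VF j" using chains_supp[OF c1ch] by blast
          then show "c1 \<sigma> * \<beta>' (map s \<sigma>) = c1 \<sigma> * a (map r \<sigma>)" using pt by simp
        qed
        also have "\<dots> = pair a (push r c1)" by (rule pair_push[OF finc1, symmetric])
        finally show ?thesis .
      qed
      have "push r c1 \<in> \<gamma> W"
        using \<gamma>(1) W(1) VFcov rproj c1in unfolding cech_homology_def by blast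
      then obtain b where b: "b \<in> boundaries W j" "push r c1 = (\<lambda>\<sigma>. c0 \<sigma> + b \<sigma>)"
        using c0(2) unfolding hclass_def by blast
      obtain e'' where e'': "e'' \<in> chains W (Suc j)" "b = bd e''" using b(1) unfolding boundaries_def by blast
      have "pair a (push r c1) = pair a c0 + pair a b"
        unfolding b(2) by (rule pair_add[OF chains_fin[OF c0ch] chains_fin[OF boundaries_chains[OF b(1)]]])
      also have "pair a b = 0" using a(2) e'' by simp
      finally have "pair a (push r c1) \<noteq> 0" using a(1) by simp
      then show False using eq zero by simp
    qed
  qed
qed

theorem proposition2p1:
  fixes X :: "'a::metric_space set"
  assumes "compact X"
  shows "\<forall>k \<in> hom_dim_set TYPE('g::field) X.
           \<exists>n \<ge> k. \<exists>A. closed A \<and> A \<subseteq> X \<and> cech_cohom_nonzero TYPE('g) X A n"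
proof
  fix k assume k: "k \<in> hom_dim_set TYPE('g) X"
  then obtain F and \<gamma> :: "'a set set \<Rightarrow> ('a set list \<Rightarrow> 'g) set" where
    k1: "k \<ge> 1" and F: "closed F" "F \<subseteq> X"
    and \<gamma>: "\<gamma> \<in> cech_homology TYPE('g) F (k - 1)" "\<not> cech_zero F (k - 1) \<gamma>"
      "incl_image_zero F X (k - 1) \<gamma>"
    unfolding hom_dim_set_def by blast
  obtain j where kj: "k = Suc j" using k1 by (cases k) auto
  have "cech_cohom_nonzero TYPE('g) X F (Suc j)"
    using main_lemma[OF F, of \<gamma> j] \<gamma> kj by simp
  then show "\<exists>n \<ge> k. \<exists>A. closed A \<and> A \<subseteq> X \<and> cech_cohom_nonzero TYPE('g) X A n"
    using F kj by blast
qed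

end
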